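(* The functor $\mathrm{Max}$ from the category of unital C*-algebras (with unital *-homomorphisms) to the category of unital involutive quantales (with unital involutive homomorphisms) is faithful: if $f,g:A\to B$ are unital *-homomorphisms with $\mathrm{Max}\,f=\mathrm{Max}\,g$, then $f=g$.
   Context: A quantale is a complete lattice with an associative multiplication distributing over arbitrary joins in both variables; unital involutive quantales and their homomorphisms preserve joins, multiplication, unit and involution. For a unital C*-algebra $A$, $\mathrm{Max}\,A$ is the quantale of all closed linear subspaces of $A$ with join $\bigvee_i M_i=\overline{\sum_i M_i}$, product $M\cdot N=$ closure of the linear span of $\{ab:a\in M,b\in N\}$, involution $M^*=\{a^*:a\in M\}$, and unit the subspace spanned by the identity. For a unital *-homomorphism $f:A\to B$, $\mathrm{Max}\,f:\mathrm{Max}\,A\to\mathrm{Max}\,B$ is $M\mapsto\overline{f[M]}$. *)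

theory Defs
  imports "HOL-Analysis.Analysis"
begin

text \<open>Unital C*-algebras as a type class: a complete normed real algebra with a unit
(the zero algebra is allowed: no axiom 1 \<noteq> 0), equipped with a complex scalar
multiplication extending the real one and an involution satisfying the C*-identity.\<close>

class unital_cstar_algebra = real_normed_algebra + banach + monoid_mult +
  fixes scaleC :: "complex \<Rightarrow> 'a \<Rightarrow> 'a" (infixr "*\<^sub>C" 75)
    and cstar :: "'a \<Rightarrow> 'a"
  assumes scaleC_of_real: "scaleC (complex_of_real r) x = scaleR r x"
    and scaleC_add_right: "scaleC c (x + y) = scaleC c x + scaleC c y"
    and scaleC_add_left: "scaleC (c + d) x = scaleC c x + scaleC d x"
    and scaleC_scaleC: "scaleC c (scaleC d x) = scaleC (c * d) x"
    and scaleC_one: "scaleC 1 x = x"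
    and norm_scaleC: "norm (scaleC c x) = cmod c * norm x"
    and mult_scaleC_left: "scaleC c x * y = scaleC c (x * y)"
    and mult_scaleC_right: "x * scaleC c y = scaleC c (x * y)"
    and cstar_cstar: "cstar (cstar x) = x"
    and cstar_add: "cstar (x + y) = cstar x + cstar y"
    and cstar_scaleC: "cstar (scaleC c x) = scaleC (cnj c) (cstar x)"
    and cstar_mult: "cstar (x * y) = cstar y * cstar x"
    and cstar_identity: "norm (cstar x * x) = (norm x)\<^sup>2"

definition closed_csubspace :: "'a::unital_cstar_algebra set \<Rightarrow> bool" where
  "closed_csubspace M \<longleftrightarrow> 0 \<in> M \<and> (\<forall>x\<in>M. \<forall>y\<in>M. x + y \<in> M)
     \<and> (\<forall>c. \<forall>x\<in>M. scaleC c x \<in> M) \<and> closed M"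

definition Max_carrier :: "'a::unital_cstar_algebra set set" where
  "Max_carrier = {M. closed_csubspace M}"

definition unital_star_hom :: "('a::unital_cstar_algebra \<Rightarrow> 'b::unital_cstar_algebra) \<Rightarrow> bool" where
  "unital_star_hom f \<longleftrightarrow> (\<forall>x y. f (x + y) = f x + f y)
     \<and> (\<forall>c x. f (scaleC c x) = scaleC c (f x))
     \<and> (\<forall>x y. f (x * y) = f x * f y)
     \<and> f 1 = 1
     \<and> (\<forall>x. f (cstar x) = cstar (f x))"

definition Max_map :: "('a::unital_cstar_algebra \<Rightarrow> 'b::unital_cstar_algebra) \<Rightarrow> 'a set \<Rightarrow> 'b set" where
  "Max_map f M = closure (f ` M)"

end

theory Submission
  imports Defs
begin

lemma scaleC_zero_left [simp]: "(0::complex) *\<^sub>C (x::'a::unital_cstar_algebra) = 0"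
  using scaleC_of_real[of 0 x] by simp

lemma scaleC_diff_left: "(c - d) *\<^sub>C (x::'a::unital_cstar_algebra) = c *\<^sub>C x - d *\<^sub>C x"
  using scaleC_add_left[of "c - d" d x] by (simp add: algebra_simps)

lemma line_closed: "closed (range (\<lambda>c::complex. c *\<^sub>C (x::'a::unital_cstar_algebra)))"
proof (cases "x = 0")
  case True
  have "range (\<lambda>c::complex. c *\<^sub>C x) = {0}"
    using norm_scaleC[of _ x] True by auto
  then show ?thesis by simp
next
  case False
  have bl: "bounded_linear (\<lambda>c::complex. c *\<^sub>C x)"
  proof (rule bounded_linear_intro[where K="norm x"])
    fix c d :: complex show "(c + d) *\<^sub>C x = c *\<^sub>C x + d *\<^sub>C x" by (rule scaleC_add_left)
  next
    fix r :: real and c :: complex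
    show "(r *\<^sub>R c) *\<^sub>C x = r *\<^sub>R (c *\<^sub>C x)"
      by (metis scaleC_of_real scaleC_scaleC scaleR_conv_of_real)
  next
    fix c :: complex show "norm (c *\<^sub>C x) \<le> norm c * norm x" by (simp add: norm_scaleC)
  qed
  have "complete ((\<lambda>c::complex. c *\<^sub>C x) ` UNIV)"
    by (rule complete_isometric_image[where e="norm x"])
       (use False bl in \<open>auto simp: norm_scaleC complete_UNIV\<close>)
  then show ?thesis by (rule complete_imp_closed)
qed

lemma line_Max: "range (\<lambda>c::complex. c *\<^sub>C (x::'a::unital_cstar_algebra)) \<in> Max_carrier"
  unfolding Max_carrier_def closed_csubspace_def
proof (intro CollectI conjI ballI allI)
  show "0 \<in> range (\<lambda>c. c *\<^sub>C x)" using scaleC_zero_left[of x, symmetric] by blast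
next
  fix y z assume "y \<in> range (\<lambda>c. c *\<^sub>C x)" "z \<in> range (\<lambda>c. c *\<^sub>C x)"
  then obtain a b where "y = a *\<^sub>C x" "z = b *\<^sub>C x" by blast
  then have "y + z = (a + b) *\<^sub>C x" by (simp add: scaleC_add_left)
  then show "y + z \<in> range (\<lambda>c. c *\<^sub>C x)" by blast
next
  fix c y assume "y \<in> range (\<lambda>c. c *\<^sub>C x)"
  then obtain a where "y = a *\<^sub>C x" by blast
  then have "c *\<^sub>C y = (c * a) *\<^sub>C x" by (simp add: scaleC_scaleC)
  then show "c *\<^sub>C y \<in> range (\<lambda>c. c *\<^sub>C x)" by blast
qed (rule line_closed)

lemma key:
  fixes f g :: "'a::unital_cstar_algebra \<Rightarrow> 'b::unital_cstar_algebra"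
  assumes f: "unital_star_hom f" and g: "unital_star_hom g"
    and h: "\<forall>M\<in>Max_carrier. Max_map f M = Max_map g M"
  shows "\<exists>c. g a = c *\<^sub>C f a"
proof -
  let ?M = "range (\<lambda>c::complex. c *\<^sub>C a)"
  have fs: "f (c *\<^sub>C a) = c *\<^sub>C f a" for c
    using f unfolding unital_star_hom_def by auto
  have fM: "f ` ?M = range (\<lambda>c::complex. c *\<^sub>C f a)"
    unfolding image_image fs ..
  have "a \<in> ?M" using scaleC_one[of a, symmetric] by blast
  then have "g a \<in> g ` ?M" by blast
  also have "\<dots> \<subseteq> Max_map g ?M" unfolding Max_map_def by (rule closure_subset)
  also have "\<dots> = Max_map f ?M" using h line_Max by metis
  also have "\<dots> = range (\<lambda>c::complex. c *\<^sub>C f a)"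
    unfolding Max_map_def fM using line_closed closure_closed by blast
  finally show ?thesis by auto
qed

theorem theorem5p3:
  fixes f g :: "'a::unital_cstar_algebra \<Rightarrow> 'b::unital_cstar_algebra"
  assumes "unital_star_hom f" and "unital_star_hom g"
    and "\<forall>M\<in>Max_carrier. Max_map f M = Max_map g M"
  shows "f = g"
proof
  fix a
  have fl: "f (x + y) = f x + f y" "f (c *\<^sub>C x) = c *\<^sub>C f x" "f 1 = 1" for x y c
    using assms(1) unfolding unital_star_hom_def by auto
  have gl: "g (x + y) = g x + g y" "g (c *\<^sub>C x) = c *\<^sub>C g x" "g 1 = 1" for x y c
    using assms(2) unfolding unital_star_hom_def by auto
  have fd: "f (x - y) = f x - f y" for x y using fl(1)[of "x - y" y] by simp
  have gd: "g (x - y) = g x - g y" for x y using gl(1)[of "x - y" y] by simp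
  obtain c where c: "g a = c *\<^sub>C f a" using key[OF assms] by blast
  obtain c' where c': "g (a + 1) = c' *\<^sub>C f (a + 1)" using key[OF assms] by blast
  have eq: "c *\<^sub>C f a + 1 = c' *\<^sub>C f a + c' *\<^sub>C 1"
  proof -
    have "c *\<^sub>C f a + 1 = g a + g 1" using c gl(3) by simp
    also have "\<dots> = g (a + 1)" using gl(1) by simp
    also have "\<dots> = c' *\<^sub>C (f a + f 1)" using c' fl(1) by simp
    also have "\<dots> = c' *\<^sub>C f a + c' *\<^sub>C 1" using fl(3) scaleC_add_right by simp
    finally show ?thesis .
  qed
  show "f a = g a"
  proof (cases "c = c'")
    case True
    with eq have "(1::'b) = c' *\<^sub>C 1" by simp
    show ?thesis
    proof (cases "c' = 1")
      case True with \<open>c = c'\<close> c show ?thesis by (simp add: scaleC_one)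
    next
      case False
      have "(c' - 1) *\<^sub>C (1::'b) = 0"
        using \<open>1 = c' *\<^sub>C 1\<close> by (simp add: scaleC_diff_left scaleC_one)
      then have "norm (1::'b) = 0" using False norm_scaleC[of "c' - 1" "1::'b"] by simp
      then have "(1::'b) = 0" by simp
      then have "y = 0" for y :: 'b by (metis mult_1_right mult_zero_right)
      then show ?thesis by metis
    qed
  next
    case False
    define l where "l = (c' - 1) / (c - c')"
    have "(c - c') *\<^sub>C f a = (c' - 1) *\<^sub>C 1"
      using eq scaleC_one[of "1::'b"] by (simp add: scaleC_diff_left algebra_simps)
    then have "(1 / (c - c')) *\<^sub>C ((c - c') *\<^sub>C f a) = (1 / (c - c')) *\<^sub>C ((c' - 1) *\<^sub>C 1)"
      by simp
    then have fa: "f a = l *\<^sub>C 1" using False by (simp add: scaleC_scaleC scaleC_one l_def)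
    obtain d where d: "g (a - l *\<^sub>C 1) = d *\<^sub>C f (a - l *\<^sub>C 1)" using key[OF assms] by blast
    have "f (a - l *\<^sub>C 1) = 0" using fd fl fa by simp
    then have "g (a - l *\<^sub>C 1) = 0" using d norm_scaleC[of d "0::'b"] by simp
    then have "g a = l *\<^sub>C 1" using gd gl by simp
    then show ?thesis using fa by simp
  qed
qed

end
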